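(* Let $A=[a_1\ \cdots\ a_m]^T\in\mathbb{R}^{m\times n}$ and $b=(b_1,\dots,b_m)^T\in\mathbb{R}^m$, let $c_i(x)=a_i^Tx-b_i$, $D(x)=\mathrm{diag}(c_1(x),\dots,c_m(x))$, and let $C(x)=\begin{bmatrix}A^T\\ D(x)\end{bmatrix}\in\mathbb{R}[x]^{(n+m)\times m}$. Then the linear function $Ax-b$ is nonsingular if and only if there exists a matrix polynomial $L(x)\in\mathbb{R}[x]^{m\times(n+m)}$ with $L(x)C(x)=I_m$. Moreover, when $Ax-b$ is nonsingular, $L(x)$ can be chosen with $\deg(L)\le m-\mathrm{rank}\,A$.
   Context: The linear function $Ax-b$ is called nonsingular if $\mathrm{rank}\,C(u)=m$ for all $u\in\mathbb{C}^n$ (equivalently, for every $u\in\mathbb{C}^n$, the vectors $a_i$ with $c_i(u)=0$ are linearly independent). $\deg(L)$ is the maximum degree of the entries of $L$; $I_m$ is the $m\times m$ identity matrix. *)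

theory Defs
  imports "Jordan_Normal_Form.DL_Rank" "HOL-Library.Poly_Mapping"
begin

text \<open>Multivariate real polynomials, represented as finitely supported maps
from monomials (exponent vectors, finitely supported maps nat to nat)
to real coefficients. Variable i corresponds to the coordinate x_i.\<close>

type_synonym rmpoly = "(nat \<Rightarrow>\<^sub>0 nat) \<Rightarrow>\<^sub>0 real"

definition mpoly_vars_below :: "nat \<Rightarrow> rmpoly \<Rightarrow> bool" where
  "mpoly_vars_below n p \<longleftrightarrow> (\<forall>\<alpha>\<in>Poly_Mapping.keys p. Poly_Mapping.keys \<alpha> \<subseteq> {..<n})"

definition mpoly_eval :: "rmpoly \<Rightarrow> real vec \<Rightarrow> real" where
  "mpoly_eval p x = (\<Sum>\<alpha>\<in>Poly_Mapping.keys p. Poly_Mapping.lookup p \<alpha> * (\<Prod>i\<in>Poly_Mapping.keys \<alpha>. (x $ i) ^ Poly_Mapping.lookup \<alpha> i))"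

text \<open>Total degree (the zero polynomial gets degree 0).\<close>
definition mpoly_degree :: "rmpoly \<Rightarrow> nat" where
  "mpoly_degree p = Max (insert 0 ((\<lambda>\<alpha>. \<Sum>i\<in>Poly_Mapping.keys \<alpha>. Poly_Mapping.lookup \<alpha> i) ` Poly_Mapping.keys p))"

text \<open>The matrix C(x) = [A^T; D(x)] of size (n+m) x m, with D(x) = diag(c_1(x),...,c_m(x)),
  c_i(x) = a_i^T x - b_i, where a_i is the i-th row of A (m x n).\<close>
definition Cmat :: "'a::comm_ring_1 mat \<Rightarrow> 'a vec \<Rightarrow> 'a vec \<Rightarrow> 'a mat" where
  "Cmat A b x = mat (dim_col A + dim_row A) (dim_row A)
     (\<lambda>(k, j). if k < dim_col A then A $$ (j, k)
               else if k - dim_col A = j then row A j \<bullet> x - b $ j else 0)"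

definition nonsingular_lin :: "real mat \<Rightarrow> real vec \<Rightarrow> bool" where
  "nonsingular_lin A b \<longleftrightarrow>
     (\<forall>u \<in> carrier_vec (dim_col A) :: complex vec set.
        vec_space.rank (dim_col A + dim_row A)
          (Cmat (map_mat complex_of_real A) (map_vec complex_of_real b) u) = dim_row A)"

definition polymat_eval :: "nat \<Rightarrow> nat \<Rightarrow> (nat \<Rightarrow> nat \<Rightarrow> rmpoly) \<Rightarrow> real vec \<Rightarrow> real mat" where
  "polymat_eval r c L x = mat r c (\<lambda>(i, k). mpoly_eval (L i k) x)"

end

theory Submission
  imports Defs
begin

definition pconst :: "real \<Rightarrow> rmpoly" where "pconst c = Poly_Mapping.single 0 c"
definition pvar :: "nat \<Rightarrow> rmpoly" where "pvar k = Poly_Mapping.single (Poly_Mapping.single k 1) 1"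

definition mon :: "(nat \<Rightarrow>\<^sub>0 nat) \<Rightarrow> real vec \<Rightarrow> real" where
  "mon a x = (\<Prod>i\<in>Poly_Mapping.keys a. (x $ i) ^ Poly_Mapping.lookup a i)"

definition mdeg :: "(nat \<Rightarrow>\<^sub>0 nat) \<Rightarrow> nat" where
  "mdeg a = (\<Sum>i\<in>Poly_Mapping.keys a. Poly_Mapping.lookup a i)"

lemma mon_superset:
  assumes "finite S" "Poly_Mapping.keys a \<subseteq> S"
  shows "mon a x = (\<Prod>i\<in>S. (x $ i) ^ Poly_Mapping.lookup a i)"
  unfolding mon_def
  by (rule prod.mono_neutral_left) (use assms in \<open>auto simp: in_keys_iff\<close>)

lemma mdeg_superset:
  assumes "finite S" "Poly_Mapping.keys a \<subseteq> S"
  shows "mdeg a = (\<Sum>i\<in>S. Poly_Mapping.lookup a i)"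
  unfolding mdeg_def
  by (rule sum.mono_neutral_left) (use assms in \<open>auto simp: in_keys_iff\<close>)

lemma mon_add: "mon (a + b) x = mon a x * mon b x"
proof -
  let ?S = "Poly_Mapping.keys a \<union> Poly_Mapping.keys b"
  have "mon (a + b) x = (\<Prod>i\<in>?S. (x $ i) ^ Poly_Mapping.lookup (a + b) i)"
    by (rule mon_superset) (auto simp: keys_add)
  also have "\<dots> = (\<Prod>i\<in>?S. (x $ i) ^ Poly_Mapping.lookup a i) * (\<Prod>i\<in>?S. (x $ i) ^ Poly_Mapping.lookup b i)"
    by (simp add: lookup_add power_add prod.distrib)
  also have "\<dots> = mon a x * mon b x"
    by (simp add: mon_superset[symmetric])
  finally show ?thesis .
qed

lemma mdeg_add: "mdeg (a + b) = mdeg a + mdeg b"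
proof -
  let ?S = "Poly_Mapping.keys a \<union> Poly_Mapping.keys b"
  have "mdeg (a + b) = (\<Sum>i\<in>?S. Poly_Mapping.lookup (a + b) i)"
    by (rule mdeg_superset) (auto simp: keys_add)
  also have "\<dots> = (\<Sum>i\<in>?S. Poly_Mapping.lookup a i) + (\<Sum>i\<in>?S. Poly_Mapping.lookup b i)"
    by (simp add: lookup_add sum.distrib)
  also have "\<dots> = mdeg a + mdeg b"
    by (simp add: mdeg_superset[symmetric])
  finally show ?thesis .
qed

lemma eval_superset:
  assumes "finite S" "Poly_Mapping.keys p \<subseteq> S"
  shows "mpoly_eval p x = (\<Sum>a\<in>S. Poly_Mapping.lookup p a * mon a x)"
  unfolding mpoly_eval_def mon_def[symmetric]
  by (rule sum.mono_neutral_left) (use assms in \<open>auto simp: in_keys_iff\<close>)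

lemma eval_add: "mpoly_eval (p + q) x = mpoly_eval p x + mpoly_eval q x"
proof -
  let ?S = "Poly_Mapping.keys p \<union> Poly_Mapping.keys q"
  have "mpoly_eval (p + q) x = (\<Sum>a\<in>?S. Poly_Mapping.lookup (p + q) a * mon a x)"
    by (rule eval_superset) (auto simp: keys_add)
  also have "\<dots> = (\<Sum>a\<in>?S. Poly_Mapping.lookup p a * mon a x) + (\<Sum>a\<in>?S. Poly_Mapping.lookup q a * mon a x)"
    by (simp add: lookup_add distrib_right sum.distrib)
  also have "\<dots> = mpoly_eval p x + mpoly_eval q x"
    by (simp add: eval_superset[symmetric])
  finally show ?thesis .
qed

lemma eval_zero[simp]: "mpoly_eval 0 x = 0"
  by (simp add: mpoly_eval_def)

lemma eval_uminus: "mpoly_eval (- p) x = - mpoly_eval p x"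
  by (simp add: mpoly_eval_def sum_negf)

lemma eval_minus: "mpoly_eval (p - q) x = mpoly_eval p x - mpoly_eval q x"
  using eval_add[of p "- q" x] eval_uminus[of q x] by simp

lemma eval_sum: "mpoly_eval (\<Sum>i\<in>S. f i) x = (\<Sum>i\<in>S. mpoly_eval (f i) x)"
  by (induction S rule: infinite_finite_induct) (auto simp: eval_add)

lemma eval_single: "mpoly_eval (Poly_Mapping.single a c) x = c * mon a x"
  by (cases "c = 0") (simp_all add: mpoly_eval_def mon_def)

lemma poly_expand: "p = (\<Sum>a\<in>Poly_Mapping.keys p. Poly_Mapping.single a (Poly_Mapping.lookup p a))"
proof (rule poly_mapping_eqI)
  fix k
  show "Poly_Mapping.lookup p k = Poly_Mapping.lookup (\<Sum>a\<in>Poly_Mapping.keys p. Poly_Mapping.single a (Poly_Mapping.lookup p a)) k"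
    by (simp add: lookup_sum lookup_single when_def in_keys_iff)
qed

lemma eval_mult: "mpoly_eval (p * q) x = mpoly_eval p x * mpoly_eval q x"
proof -
  let ?P = "Poly_Mapping.keys p" and ?Q = "Poly_Mapping.keys q"
  have "p * q = (\<Sum>a\<in>?P. Poly_Mapping.single a (Poly_Mapping.lookup p a)) * (\<Sum>b\<in>?Q. Poly_Mapping.single b (Poly_Mapping.lookup q b))"
    by (simp add: poly_expand[symmetric])
  also have "\<dots> = (\<Sum>a\<in>?P. \<Sum>b\<in>?Q. Poly_Mapping.single (a + b) (Poly_Mapping.lookup p a * Poly_Mapping.lookup q b))"
    by (simp add: sum_product mult_single)
  finally have "mpoly_eval (p * q) x = (\<Sum>a\<in>?P. \<Sum>b\<in>?Q. (Poly_Mapping.lookup p a * mon a x) * (Poly_Mapping.lookup q b * mon b x))"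
    by (simp add: eval_sum eval_single mon_add mult_ac)
  also have "\<dots> = mpoly_eval p x * mpoly_eval q x"
    by (simp only: mpoly_eval_def mon_def[symmetric] sum_product)
  finally show ?thesis .
qed

lemma eval_one[simp]: "mpoly_eval 1 x = 1"
  by (simp add: mpoly_eval_def)

lemma eval_prod: "mpoly_eval (\<Prod>i\<in>S. f i) x = (\<Prod>i\<in>S. mpoly_eval (f i) x)"
  by (induction S rule: infinite_finite_induct) (auto simp: eval_mult)

lemma eval_pconst[simp]: "mpoly_eval (pconst c) x = c"
  by (simp add: pconst_def eval_single mon_def)

lemma eval_pvar[simp]: "mpoly_eval (pvar k) x = x $ k"
  by (simp add: pvar_def eval_single mon_def)

definition pgood :: "nat \<Rightarrow> nat \<Rightarrow> rmpoly \<Rightarrow> bool" where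
  "pgood n d p \<longleftrightarrow> (\<forall>a\<in>Poly_Mapping.keys p. Poly_Mapping.keys a \<subseteq> {..<n} \<and> mdeg a \<le> d)"

lemma pgood_mono: "pgood n d p \<Longrightarrow> d \<le> d' \<Longrightarrow> pgood n d' p"
  unfolding pgood_def by force

lemma pgood_zero[simp]: "pgood n d 0"
  by (simp add: pgood_def)

lemma pgood_add: assumes "pgood n d p" "pgood n d q" shows "pgood n d (p + q)"
  unfolding pgood_def
proof
  fix a assume a: "a \<in> Poly_Mapping.keys (p + q)"
  have "a \<in> Poly_Mapping.keys p \<union> Poly_Mapping.keys q" using subsetD[OF keys_add a] .
  then show "Poly_Mapping.keys a \<subseteq> {..<n} \<and> mdeg a \<le> d"
    using assms unfolding pgood_def by (elim UnE) auto
qed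

lemma pgood_uminus: "pgood n d p \<Longrightarrow> pgood n d (- p)"
  unfolding pgood_def by simp

lemma pgood_minus: "pgood n d p \<Longrightarrow> pgood n d q \<Longrightarrow> pgood n d (p - q)"
  using pgood_add[of n d p "- q"] pgood_uminus[of n d q] by simp

lemma pgood_mult: "pgood n d1 p \<Longrightarrow> pgood n d2 q \<Longrightarrow> pgood n (d1 + d2) (p * q)"
  unfolding pgood_def
proof
  fix c assume p: "\<forall>a\<in>Poly_Mapping.keys p. Poly_Mapping.keys a \<subseteq> {..<n} \<and> mdeg a \<le> d1"
    and q: "\<forall>a\<in>Poly_Mapping.keys q. Poly_Mapping.keys a \<subseteq> {..<n} \<and> mdeg a \<le> d2"
    and c: "c \<in> Poly_Mapping.keys (p * q)"
  then obtain a b where ab: "c = a + b" "a \<in> Poly_Mapping.keys p" "b \<in> Poly_Mapping.keys q"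
  proof -
    have "c \<in> {a + b |a b. a \<in> Poly_Mapping.keys p \<and> b \<in> Poly_Mapping.keys q}"
      using keys_mult[of p q] c by (rule subsetD)
    then show ?thesis using that by (auto simp only: mem_Collect_eq)
  qed
  have k: "Poly_Mapping.keys c \<subseteq> Poly_Mapping.keys a \<union> Poly_Mapping.keys b"
    using ab(1) keys_add[of a b] by simp
  have d: "mdeg c = mdeg a + mdeg b" using ab(1) by (simp add: mdeg_add)
  have "Poly_Mapping.keys a \<subseteq> {..<n}" "mdeg a \<le> d1" using p ab(2) by auto
  moreover have "Poly_Mapping.keys b \<subseteq> {..<n}" "mdeg b \<le> d2" using q ab(3) by auto
  ultimately show "Poly_Mapping.keys c \<subseteq> {..<n} \<and> mdeg c \<le> d1 + d2"
    using k d by auto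
qed

lemma pgood_sum: "(\<And>i. i \<in> S \<Longrightarrow> pgood n d (f i)) \<Longrightarrow> pgood n d (\<Sum>i\<in>S. f i)"
proof (induction S rule: infinite_finite_induct)
  case (insert x F)
  have "pgood n d (f x + sum f F)"
    by (rule pgood_add) (use insert in auto)
  then show ?case using insert(1,2) by simp
qed simp_all

lemma pgood_one[simp]: "pgood n d 1"
  by (simp add: pgood_def mdeg_def)

lemma pgood_prod: "(\<And>i. i \<in> S \<Longrightarrow> pgood n 1 (f i)) \<Longrightarrow> pgood n (card S) (\<Prod>i\<in>S. f i)"
proof (induction S rule: infinite_finite_induct)
  case (insert x F)
  have "pgood n (1 + card F) (f x * prod f F)"
    by (rule pgood_mult) (use insert in auto)
  then show ?case using insert(1,2) by simp
qed simp_all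

lemma pgood_pconst[simp]: "pgood n d (pconst c)"
  by (simp add: pgood_def pconst_def mdeg_def)

lemma pgood_pvar: "k < n \<Longrightarrow> pgood n 1 (pvar k)"
  by (simp add: pgood_def pvar_def mdeg_def)

lemma pgood_degree: "pgood n d p \<Longrightarrow> mpoly_degree p \<le> d"
  unfolding pgood_def mpoly_degree_def mdeg_def[symmetric]
  by (subst Max_le_iff) auto

lemma pgood_vars: "pgood n d p \<Longrightarrow> mpoly_vars_below n p"
  unfolding pgood_def mpoly_vars_below_def by auto

lemma fredholm:
  fixes a :: "nat \<Rightarrow> nat \<Rightarrow> real" and y :: "nat \<Rightarrow> real"
  assumes "finite I"
  shows "(\<exists>z. \<forall>j\<in>I. (\<Sum>k<n. a j k * z k) = y j) \<or>
         (\<exists>l. (\<forall>k<n. (\<Sum>j\<in>I. l j * a j k) = 0) \<and> (\<Sum>j\<in>I. l j * y j) \<noteq> 0)"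
  using assms
proof (induction n arbitrary: a y I)
  case 0
  show ?case
  proof (cases "\<forall>j\<in>I. y j = 0")
    case True
    then show ?thesis by auto
  next
    case False
    then obtain j0 where j0: "j0 \<in> I" "y j0 \<noteq> 0" by auto
    let ?l = "\<lambda>j. if j = j0 then 1 else (0::real)"
    have "(\<Sum>j\<in>I. ?l j * y j) = (\<Sum>j\<in>I. if j = j0 then y j else 0)"
      by (rule sum.cong) auto
    also have "\<dots> = y j0" using j0 0 by simp
    finally have "(\<Sum>j\<in>I. ?l j * y j) = y j0" .
    then show ?thesis using j0 by (intro disjI2 exI[of _ ?l]) auto
  qed
next
  case (Suc n)
  show ?case
  proof (cases "\<forall>j\<in>I. a j n = 0")
    case True
    from Suc.IH[OF Suc.prems, of a y] show ?thesis
    proof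
      assume "\<exists>z. \<forall>j\<in>I. (\<Sum>k<n. a j k * z k) = y j"
      then obtain z where "\<forall>j\<in>I. (\<Sum>k<n. a j k * z k) = y j" by blast
      then have "\<forall>j\<in>I. (\<Sum>k<Suc n. a j k * z k) = y j" using True by simp
      then show ?thesis by blast
    next
      assume "\<exists>l. (\<forall>k<n. (\<Sum>j\<in>I. l j * a j k) = 0) \<and> (\<Sum>j\<in>I. l j * y j) \<noteq> 0"
      then obtain l where l: "\<forall>k<n. (\<Sum>j\<in>I. l j * a j k) = 0" "(\<Sum>j\<in>I. l j * y j) \<noteq> 0" by blast
      have "\<forall>k<Suc n. (\<Sum>j\<in>I. l j * a j k) = 0"
        using l(1) True by (auto simp: less_Suc_eq)
      then show ?thesis using l(2) by blast
    qed
  next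
    case False
    then obtain p where p: "p \<in> I" "a p n \<noteq> 0" by auto
    define t where "t j = a j n / a p n" for j
    define a' where "a' j k = a j k - t j * a p k" for j k
    define y' where "y' j = y j - t j * y p" for j
    let ?I = "I - {p}"
    have fin: "finite ?I" using Suc.prems by simp
    have ajn: "a j n = t j * a p n" for j using p(2) by (simp add: t_def)
    from Suc.IH[OF fin, of a' y'] show ?thesis
    proof
      assume "\<exists>z. \<forall>j\<in>?I. (\<Sum>k<n. a' j k * z k) = y' j"
      then obtain z' where z': "\<forall>j\<in>?I. (\<Sum>k<n. a' j k * z' k) = y' j" by blast
      define Sp where "Sp = (\<Sum>k<n. a p k * z' k)"
      define z where "z = z'(n := (y p - Sp) / a p n)"
      have zs: "(\<Sum>k<n. f k * z k) = (\<Sum>k<n. f k * z' k)" for f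
        by (rule sum.cong) (auto simp: z_def)
      have zn: "z n = (y p - Sp) / a p n" by (simp add: z_def)
      have "(\<Sum>k<Suc n. a j k * z k) = y j" if j: "j \<in> I" for j
      proof (cases "j = p")
        case True
        then show ?thesis using p(2) by (simp add: zs zn Sp_def)
      next
        case False
        then have jI: "j \<in> ?I" using j by simp
        have "(\<Sum>k<n. a' j k * z' k) = (\<Sum>k<n. a j k * z' k) - t j * Sp"
          by (simp add: a'_def Sp_def left_diff_distrib sum_subtractf sum_distrib_left mult.assoc)
        then have "(\<Sum>k<n. a j k * z' k) = (\<Sum>k<n. a' j k * z' k) + t j * Sp" by simp
        also have "\<dots> = y' j + t j * Sp" using z' jI by simp
        finally have "(\<Sum>k<n. a j k * z' k) = y j - t j * y p + t j * Sp" by (simp add: y'_def)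
        moreover have "(\<Sum>k<Suc n. a j k * z k) = (\<Sum>k<n. a j k * z' k) + a j n * z n"
          by (simp add: zs)
        moreover have "a j n * z n = t j * y p - t j * Sp"
        proof -
          have "a p n * ((y p - Sp) / a p n) = y p - Sp" using p(2) by simp
          then have "a j n * z n = t j * (y p - Sp)" using p(2) by (simp add: ajn[of j] zn mult.assoc)
          then show ?thesis by (simp add: right_diff_distrib)
        qed
        ultimately show ?thesis by linarith
      qed
      then show ?thesis by blast
    next
      assume "\<exists>l. (\<forall>k<n. (\<Sum>j\<in>?I. l j * a' j k) = 0) \<and> (\<Sum>j\<in>?I. l j * y' j) \<noteq> 0"
      then obtain l' where l': "\<forall>k<n. (\<Sum>j\<in>?I. l' j * a' j k) = 0" "(\<Sum>j\<in>?I. l' j * y' j) \<noteq> 0" by blast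
      define T where "T = (\<Sum>j\<in>?I. l' j * t j)"
      define l where "l = l'(p := - T)"
      have split: "(\<Sum>j\<in>I. l j * f j) = - T * f p + (\<Sum>j\<in>?I. l' j * f j)" for f
      proof -
        have "(\<Sum>j\<in>I. l j * f j) = l p * f p + (\<Sum>j\<in>?I. l j * f j)"
          using Suc.prems p(1) by (simp add: sum.remove)
        also have "(\<Sum>j\<in>?I. l j * f j) = (\<Sum>j\<in>?I. l' j * f j)"
          by (rule sum.cong) (auto simp: l_def)
        finally show ?thesis by (simp add: l_def)
      qed
      have "(\<Sum>j\<in>I. l j * a j k) = 0" if k: "k < Suc n" for k
      proof (cases "k = n")
        case True
        have "(\<Sum>j\<in>?I. l' j * a j n) = (\<Sum>j\<in>?I. l' j * t j * a p n)"
        proof (rule sum.cong[OF refl])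
          fix j show "l' j * a j n = l' j * t j * a p n" by (subst ajn) simp
        qed
        also have "\<dots> = T * a p n"
          by (simp add: T_def sum_distrib_right)
        finally show ?thesis using True by (simp add: split)
      next
        case False
        then have kn: "k < n" using k by simp
        have "(\<Sum>j\<in>?I. l' j * a' j k) = (\<Sum>j\<in>?I. l' j * a j k) - T * a p k"
          by (simp add: a'_def T_def right_diff_distrib sum_subtractf sum_distrib_right mult.assoc)
        then have "(\<Sum>j\<in>?I. l' j * a j k) = (\<Sum>j\<in>?I. l' j * a' j k) + T * a p k" by simp
        then show ?thesis using l'(1) kn by (simp add: split)
      qed
      moreover have "(\<Sum>j\<in>I. l j * y j) = (\<Sum>j\<in>?I. l' j * y' j)"
      proof -
        have "(\<Sum>j\<in>?I. l' j * y' j) = (\<Sum>j\<in>?I. l' j * y j) - T * y p"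
          by (simp add: y'_def T_def right_diff_distrib sum_subtractf sum_distrib_right mult.assoc)
        then have "(\<Sum>j\<in>?I. l' j * y j) = (\<Sum>j\<in>?I. l' j * y' j) + T * y p" by simp
        then show ?thesis by (simp add: split)
      qed
      ultimately show ?thesis using l'(2) by (intro disjI2 exI[of _ l]) auto
    qed
  qed
qed

definition indep :: "nat \<Rightarrow> (nat \<Rightarrow> nat \<Rightarrow> real) \<Rightarrow> nat set \<Rightarrow> bool" where
  "indep n a Z \<longleftrightarrow> (\<forall>l. (\<forall>k<n. (\<Sum>j\<in>Z. l j * a j k) = 0) \<longrightarrow> (\<forall>j\<in>Z. l j = 0))"

definition spans :: "nat \<Rightarrow> nat \<Rightarrow> (nat \<Rightarrow> nat \<Rightarrow> real) \<Rightarrow> nat set \<Rightarrow> bool" where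
  "spans m n a Z \<longleftrightarrow> (\<forall>i<m. \<exists>mu. \<forall>k<n. a i k = (\<Sum>j\<in>Z. mu j * a j k))"

definition cf :: "nat \<Rightarrow> (nat \<Rightarrow> nat \<Rightarrow> real) \<Rightarrow> (nat \<Rightarrow> real) \<Rightarrow> nat \<Rightarrow> (nat \<Rightarrow> real) \<Rightarrow> real" where
  "cf n a bb j x = (\<Sum>k<n. a j k * x k) - bb j"

definition NSf :: "nat \<Rightarrow> nat \<Rightarrow> (nat \<Rightarrow> nat \<Rightarrow> real) \<Rightarrow> (nat \<Rightarrow> real) \<Rightarrow> bool" where
  "NSf m n a bb \<longleftrightarrow> (\<forall>Z z. Z \<subseteq> {..<m} \<longrightarrow> (\<forall>j\<in>Z. (\<Sum>k<n. a j k * z k) = bb j) \<longrightarrow> indep n a Z)"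

lemma spans_all: "spans m n a {..<m}"
  unfolding spans_def
proof (intro allI impI)
  fix i assume i: "i < m"
  show "\<exists>mu. \<forall>k<n. a i k = (\<Sum>j\<in>{..<m}. mu j * a j k)"
  proof (intro exI[of _ "\<lambda>j. if j = i then 1 else 0"] allI impI)
    fix k
    have "(\<Sum>j\<in>{..<m}. (if j = i then 1 else 0) * a j k) = (\<Sum>j\<in>{..<m}. if j = i then a j k else 0)"
      by (rule sum.cong) auto
    also have "\<dots> = a i k" using i by simp
    finally show "a i k = (\<Sum>j\<in>{..<m}. (if j = i then 1 else 0) * a j k)" by simp
  qed
qed

lemma spans_remove:
  assumes sp: "spans m n a Z" and fin: "finite Z" and p: "p \<in> Z"
    and l1: "\<forall>k<n. (\<Sum>j\<in>Z. l j * a j k) = 0" and lp: "l p \<noteq> 0"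
  shows "spans m n a (Z - {p})"
  unfolding spans_def
proof (intro allI impI)
  fix i assume i: "i < m"
  obtain mu where mu: "\<forall>k<n. a i k = (\<Sum>j\<in>Z. mu j * a j k)"
    using sp i unfolding spans_def by blast
  define mu' where "mu' j = mu j - (mu p / l p) * l j" for j
  show "\<exists>mu. \<forall>k<n. a i k = (\<Sum>j\<in>Z - {p}. mu j * a j k)"
  proof (intro exI[of _ mu'] allI impI)
    fix k assume k: "k < n"
    have s1: "(\<Sum>j\<in>Z. mu j * a j k) = mu p * a p k + (\<Sum>j\<in>Z - {p}. mu j * a j k)"
      using fin p by (simp add: sum.remove)
    have "l p * a p k + (\<Sum>j\<in>Z - {p}. l j * a j k) = 0"
      using l1 k fin p by (simp add: sum.remove)
    then have s2: "(\<Sum>j\<in>Z - {p}. l j * a j k) = - (l p * a p k)" by simp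
    have "(\<Sum>j\<in>Z - {p}. mu' j * a j k) = (\<Sum>j\<in>Z - {p}. mu j * a j k - (mu p / l p) * (l j * a j k))"
      by (rule sum.cong) (simp_all add: mu'_def algebra_simps)
    also have "\<dots> = (\<Sum>j\<in>Z - {p}. mu j * a j k) - (mu p / l p) * (\<Sum>j\<in>Z - {p}. l j * a j k)"
      by (simp add: sum_subtractf sum_distrib_left)
    also have "\<dots> = (\<Sum>j\<in>Z - {p}. mu j * a j k) + mu p * a p k"
      using lp by (simp add: s2)
    also have "\<dots> = a i k" using s1 mu k by simp
    finally show "a i k = (\<Sum>j\<in>Z - {p}. mu' j * a j k)" by simp
  qed
qed

lemma dep_step:
  assumes ns: "NSf m n a bb" and Z: "Z \<subseteq> {..<m}" and dep: "\<not> indep n a Z"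
  shows "\<exists>l. (\<forall>k<n. (\<Sum>j\<in>Z. l j * a j k) = 0) \<and> (\<Sum>j\<in>Z. l j * bb j) \<noteq> 0"
proof -
  have fin: "finite Z" using Z finite_subset by blast
  from fredholm[OF fin, where n=n and a=a and y=bb] show ?thesis
  proof
    assume "\<exists>z. \<forall>j\<in>Z. (\<Sum>k<n. a j k * z k) = bb j"
    then obtain z where "\<forall>j\<in>Z. (\<Sum>k<n. a j k * z k) = bb j" by blast
    then have "indep n a Z" using ns Z unfolding NSf_def by blast
    then show ?thesis using dep by blast
  qed
qed

lemma cf_rel:
  assumes l1: "\<forall>k<n. (\<Sum>j\<in>Z. l j * a j k) = 0"
  shows "(\<Sum>j\<in>Z. l j * cf n a bb j x) = - (\<Sum>j\<in>Z. l j * bb j)"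
proof -
  have "(\<Sum>j\<in>Z. l j * cf n a bb j x) = (\<Sum>j\<in>Z. \<Sum>k<n. l j * a j k * x k) - (\<Sum>j\<in>Z. l j * bb j)"
    by (simp add: cf_def right_diff_distrib sum_subtractf sum_distrib_left mult_ac)
  also have "(\<Sum>j\<in>Z. \<Sum>k<n. l j * a j k * x k) = (\<Sum>k<n. (\<Sum>j\<in>Z. l j * a j k) * x k)"
    by (simp add: sum.swap[of _ Z] sum_distrib_right)
  also have "\<dots> = 0" using l1 by simp
  finally show ?thesis by simp
qed

lemma K_lemma:
  assumes ns: "NSf m n a bb"
  shows "Z \<subseteq> {..<m} \<Longrightarrow> spans m n a Z \<Longrightarrow>
    \<exists>al. (\<forall>Z'. al Z' \<noteq> 0 \<longrightarrow> Z' \<subseteq> Z \<and> indep n a Z' \<and> spans m n a Z') \<and>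
         (\<forall>x. (\<Sum>Z'\<in>Pow Z. al Z' * (\<Prod>j\<in>Z - Z'. cf n a bb j x)) = 1)"
proof (induction "card Z" arbitrary: Z rule: less_induct)
  case less
  have fin: "finite Z" using less.prems(1) finite_subset by blast
  show ?case
  proof (cases "indep n a Z")
    case True
    define al where "al Z' = (if Z' = Z then 1 else (0::real))" for Z'
    have "(\<Sum>Z'\<in>Pow Z. al Z' * (\<Prod>j\<in>Z - Z'. cf n a bb j x)) = 1" for x
    proof -
      have "(\<Sum>Z'\<in>Pow Z. al Z' * (\<Prod>j\<in>Z - Z'. cf n a bb j x)) =
            (\<Sum>Z'\<in>Pow Z. if Z' = Z then (\<Prod>j\<in>Z - Z'. cf n a bb j x) else 0)"
        by (rule sum.cong) (auto simp: al_def)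
      also have "\<dots> = 1" using fin by simp
      finally show ?thesis .
    qed
    moreover have "\<forall>Z'. al Z' \<noteq> 0 \<longrightarrow> Z' \<subseteq> Z \<and> indep n a Z' \<and> spans m n a Z'"
      using True less.prems(2) by (auto simp: al_def split: if_splits)
    ultimately show ?thesis by blast
  next
    case False
    obtain l where l1: "\<forall>k<n. (\<Sum>j\<in>Z. l j * a j k) = 0" and l2: "(\<Sum>j\<in>Z. l j * bb j) \<noteq> 0"
      using dep_step[OF ns less.prems(1) False] by blast
    define be where "be = (\<Sum>j\<in>Z. l j * bb j)"
    define L where "L = {j\<in>Z. l j \<noteq> 0}"
    have finL: "finite L" using fin by (simp add: L_def)
    have "\<forall>j\<in>L. \<exists>al. (\<forall>Z'. al Z' \<noteq> 0 \<longrightarrow> Z' \<subseteq> Z - {j} \<and> indep n a Z' \<and> spans m n a Z') \<and>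
         (\<forall>x. (\<Sum>Z'\<in>Pow (Z - {j}). al Z' * (\<Prod>i\<in>(Z - {j}) - Z'. cf n a bb i x)) = 1)"
    proof
      fix j assume j: "j \<in> L"
      then have jZ: "j \<in> Z" and lj: "l j \<noteq> 0" by (auto simp: L_def)
      have "card (Z - {j}) < card Z" by (rule card_Diff1_less[OF fin jZ])
      moreover have "Z - {j} \<subseteq> {..<m}" using less.prems(1) by blast
      moreover have "spans m n a (Z - {j})"
        by (rule spans_remove[OF less.prems(2) fin jZ l1 lj])
      ultimately show "\<exists>al. (\<forall>Z'. al Z' \<noteq> 0 \<longrightarrow> Z' \<subseteq> Z - {j} \<and> indep n a Z' \<and> spans m n a Z') \<and>
         (\<forall>x. (\<Sum>Z'\<in>Pow (Z - {j}). al Z' * (\<Prod>i\<in>(Z - {j}) - Z'. cf n a bb i x)) = 1)"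
        using less.hyps by blast
    qed
    then obtain f where f: "\<And>j. j \<in> L \<Longrightarrow> (\<forall>Z'. f j Z' \<noteq> 0 \<longrightarrow> Z' \<subseteq> Z - {j} \<and> indep n a Z' \<and> spans m n a Z') \<and>
         (\<forall>x. (\<Sum>Z'\<in>Pow (Z - {j}). f j Z' * (\<Prod>i\<in>(Z - {j}) - Z'. cf n a bb i x)) = 1)"
      by metis
    define al where "al Z' = (\<Sum>j\<in>L. (- l j / be) * f j Z')" for Z'
    have supp: "\<forall>Z'. al Z' \<noteq> 0 \<longrightarrow> Z' \<subseteq> Z \<and> indep n a Z' \<and> spans m n a Z'"
    proof (intro allI impI)
      fix Z' assume "al Z' \<noteq> 0"
      then obtain j where j: "j \<in> L" "- l j / be * f j Z' \<noteq> 0"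
        unfolding al_def using sum.not_neutral_contains_not_neutral by blast
      then have "f j Z' \<noteq> 0" by auto
      then show "Z' \<subseteq> Z \<and> indep n a Z' \<and> spans m n a Z'" using f[OF j(1)] by blast
    qed
    have inner: "(\<Sum>Z'\<in>Pow Z. f j Z' * (\<Prod>i\<in>Z - Z'. cf n a bb i x)) = cf n a bb j x"
      if j: "j \<in> L" for j x
    proof -
      have jZ: "j \<in> Z" using j by (simp add: L_def)
      have "(\<Sum>Z'\<in>Pow Z. f j Z' * (\<Prod>i\<in>Z - Z'. cf n a bb i x)) =
            (\<Sum>Z'\<in>Pow (Z - {j}). f j Z' * (\<Prod>i\<in>Z - Z'. cf n a bb i x))"
      proof (rule sum.mono_neutral_right)
        show "finite (Pow Z)" using fin by simp
        show "Pow (Z - {j}) \<subseteq> Pow Z" by auto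
        show "\<forall>Z'\<in>Pow Z - Pow (Z - {j}). f j Z' * (\<Prod>i\<in>Z - Z'. cf n a bb i x) = 0"
        proof
          fix Z' assume "Z' \<in> Pow Z - Pow (Z - {j})"
          then have "f j Z' = 0" using f[OF j] by blast
          then show "f j Z' * (\<Prod>i\<in>Z - Z'. cf n a bb i x) = 0" by simp
        qed
      qed
      also have "\<dots> = (\<Sum>Z'\<in>Pow (Z - {j}). cf n a bb j x * (f j Z' * (\<Prod>i\<in>(Z - {j}) - Z'. cf n a bb i x)))"
      proof (rule sum.cong[OF refl])
        fix Z' assume "Z' \<in> Pow (Z - {j})"
        then have "Z - Z' = insert j ((Z - {j}) - Z')" using jZ by auto
        moreover have "finite ((Z - {j}) - Z')" using fin by simp
        ultimately have "(\<Prod>i\<in>Z - Z'. cf n a bb i x) = cf n a bb j x * (\<Prod>i\<in>(Z - {j}) - Z'. cf n a bb i x)"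
          by simp
        then show "f j Z' * (\<Prod>i\<in>Z - Z'. cf n a bb i x) = cf n a bb j x * (f j Z' * (\<Prod>i\<in>(Z - {j}) - Z'. cf n a bb i x))"
          by simp
      qed
      also have "\<dots> = cf n a bb j x"
        using f[OF j] by (simp add: sum_distrib_left[symmetric])
      finally show ?thesis .
    qed
    have "(\<Sum>Z'\<in>Pow Z. al Z' * (\<Prod>i\<in>Z - Z'. cf n a bb i x)) = 1" for x
    proof -
      have "(\<Sum>Z'\<in>Pow Z. al Z' * (\<Prod>i\<in>Z - Z'. cf n a bb i x)) =
            (\<Sum>Z'\<in>Pow Z. \<Sum>j\<in>L. (- l j / be) * (f j Z' * (\<Prod>i\<in>Z - Z'. cf n a bb i x)))"
        by (rule sum.cong[OF refl]) (simp add: al_def sum_distrib_right mult.assoc)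
      also have "\<dots> = (\<Sum>j\<in>L. (- l j / be) * (\<Sum>Z'\<in>Pow Z. f j Z' * (\<Prod>i\<in>Z - Z'. cf n a bb i x)))"
        by (simp add: sum.swap[of _ "Pow Z"] sum_distrib_left)
      also have "\<dots> = (\<Sum>j\<in>L. (- l j / be) * cf n a bb j x)"
        by (rule sum.cong[OF refl]) (simp add: inner)
      also have "\<dots> = (\<Sum>j\<in>Z. (- l j / be) * cf n a bb j x)"
        by (rule sum.mono_neutral_left) (auto simp: L_def fin)
      also have "\<dots> = (- 1 / be) * (\<Sum>j\<in>Z. l j * cf n a bb j x)"
        by (simp add: sum_distrib_left)
      also have "\<dots> = 1" using cf_rel[OF l1] l2 by (simp add: be_def)
      finally show ?thesis .
    qed
    then show ?thesis using supp by blast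
  qed
qed

lemma (in vec_space) rank_le_factor:
  assumes A: "A \<in> carrier_mat n nc" and T: "T \<in> carrier_mat n p" and B: "B \<in> carrier_mat p nc"
    and AB: "A = T * B"
  shows "rank A \<le> p"
proof -
  have sub: "span (set (cols A)) \<subseteq> span (set (cols T))"
  proof
    fix y assume "y \<in> span (set (cols A))"
    then have "y \<in> col_space A" by (simp add: col_space_def)
    then have "\<exists>x\<in>carrier_vec (dim_col A). A *\<^sub>v x = y" unfolding col_space_eq[OF A] by blast
    then obtain x where x0: "x \<in> carrier_vec (dim_col A)" and x2: "A *\<^sub>v x = y" by blast
    have x1: "x \<in> carrier_vec nc" using x0 A by simp
    have "y = T *\<^sub>v (B *\<^sub>v x)"
    proof -
      have "y = (T * B) *\<^sub>v x" using x2 AB by simp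
      also have "\<dots> = T *\<^sub>v (B *\<^sub>v x)" by (rule assoc_mult_mat_vec[OF T B x1])
      finally show ?thesis .
    qed
    moreover have "B *\<^sub>v x \<in> carrier_vec p" using mult_mat_vec_carrier[OF B x1] .
    moreover have "y \<in> carrier_vec n" using mult_mat_vec_carrier[OF A x1] x2 by simp
    ultimately have "y \<in> carrier_vec (dim_row T) \<and> (\<exists>x\<in>carrier_vec (dim_col T). T *\<^sub>v x = y)" using T by auto
    then have "y \<in> col_space T" unfolding col_space_eq[OF T] by blast
    then show "y \<in> span (set (cols T))" by (simp add: col_space_def)
  qed
  have cT: "set (cols T) \<subseteq> carrier_vec n" using cols_dim[of T] T by simp
  have cA: "set (cols A) \<subseteq> carrier_vec n" using cols_dim[of A] A by simp
  have sT: "subspace class_ring (span (set (cols T))) V"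
    by (rule span_is_subspace) (simp add: cT)
  have sA: "subspace class_ring (span (set (cols A))) V"
    by (rule span_is_subspace) (simp add: cA)
  have nested: "subspace class_ring (span (set (cols A))) (vs (span (set (cols T))))"
    using nested_subspaces[OF sT sA sub] .
  have "vectorspace.dim class_ring (vs (span (set (cols A)))) \<le> vectorspace.dim class_ring (vs (span (set (cols T))))"
  proof -
    have f: "vectorspace.fin_dim class_ring ((vs (span (set (cols T))))\<lparr>carrier := span (set (cols A))\<rparr>)"
      using fin_dim_span_cols[OF A] by simp
    show ?thesis
      using vectorspace.subspace_dim[OF subspace_is_vs[OF sT] nested fin_dim_span_cols[OF T] f] by simp
  qed
  then have "rank A \<le> rank T"
    unfolding rank_def by simp
  also have "rank T \<le> p" using rank_le_nc[OF T] .
  finally show ?thesis .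
qed
lemma (in vec_space) rank_full_iff:
  assumes A: "A \<in> carrier_mat n nc"
  shows "rank A = nc \<longleftrightarrow> (\<forall>v\<in>carrier_vec nc. A *\<^sub>v v = 0\<^sub>v n \<longrightarrow> v = 0\<^sub>v nc)"
proof
  assume r: "rank A = nc"
  have d: "distinct (cols A)"
  proof (rule ccontr)
    assume nd: "\<not> distinct (cols A)"
    obtain S where S: "maximal S (\<lambda>T. T \<subseteq> set (cols A) \<and> lin_indpt T)"
      using maximal_exists[of "(\<lambda>T. T \<subseteq> set (cols A) \<and> lin_indpt T)" "card (set (cols A))" "{}"]
      by (meson List.finite_set card_mono empty_iff empty_subsetI finite_lin_indpt2 rev_finite_subset)
    then have "card S \<le> card (set (cols A))" by (simp add: card_mono maximal_def)
    also have "card (set (cols A)) < nc"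
    proof -
      have "card (set (cols A)) \<le> length (cols A)" by (rule card_length)
      moreover have "card (set (cols A)) \<noteq> length (cols A)" using nd card_distinct by blast
      ultimately show ?thesis using A by simp
    qed
    finally have "rank A < nc" using rank_card_indpt[OF A S] by simp
    then show False using r by simp
  qed
  have li: "lin_indpt (set (cols A))" using full_rank_lin_indpt[OF A r d] .
  show "\<forall>v\<in>carrier_vec nc. A *\<^sub>v v = 0\<^sub>v n \<longrightarrow> v = 0\<^sub>v nc"
  proof (intro ballI impI)
    fix v assume v: "v \<in> carrier_vec nc" and Av: "A *\<^sub>v v = 0\<^sub>v n"
    show "v = 0\<^sub>v nc"
    proof (rule ccontr)
      assume "v \<noteq> 0\<^sub>v nc"
      then have "lin_dep (set (cols A))" using lin_depI[OF A v _ Av d] by blast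
      then show False using li by blast
    qed
  qed
next
  assume K: "\<forall>v\<in>carrier_vec nc. A *\<^sub>v v = 0\<^sub>v n \<longrightarrow> v = 0\<^sub>v nc"
  have d: "distinct (cols A)"
  proof (rule ccontr)
    assume "\<not> distinct (cols A)"
    then obtain i j where ij: "i < nc" "j < nc" "i \<noteq> j" "cols A ! i = cols A ! j"
      using A by (auto simp: distinct_conv_nth)
    then have cij: "col A i = col A j" using A by simp
    define v :: "'a vec" where "v = unit_vec nc i - unit_vec nc j"
    have v: "v \<in> carrier_vec nc" by (simp add: v_def)
    have "A *\<^sub>v v = 0\<^sub>v n"
    proof (rule eq_vecI)
      show "dim_vec (A *\<^sub>v v) = dim_vec (0\<^sub>v n)" using A by simp
      fix r assume "r < dim_vec (0\<^sub>v n)"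
      then have r: "r < n" by simp
      have "(A *\<^sub>v v) $ r = row A r \<bullet> v" using A r by simp
      also have "\<dots> = row A r \<bullet> unit_vec nc i - row A r \<bullet> unit_vec nc j"
        unfolding v_def by (rule scalar_prod_minus_distrib[where n=nc]) (use A in auto)
      also have "\<dots> = A $$ (r, i) - A $$ (r, j)"
        using A r ij by simp
      also have "\<dots> = col A i $ r - col A j $ r" using A r ij(1,2) by simp
      also have "\<dots> = 0" using cij by simp
      finally show "(A *\<^sub>v v) $ r = 0\<^sub>v n $ r" using r by simp
    qed
    moreover have "v \<noteq> 0\<^sub>v nc"
    proof
      assume "v = 0\<^sub>v nc"
      then have "v $ i = 0" using ij by simp
      moreover have "v $ i = 1" using ij by (simp add: v_def)
      ultimately show False by simp
    qed
    ultimately show False using K v by blast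
  qed
  have "lin_indpt (set (cols A))"
  proof
    assume "lin_dep (set (cols A))"
    then obtain v where "v \<in> carrier_vec nc" "v \<noteq> 0\<^sub>v nc" "A *\<^sub>v v = 0\<^sub>v n"
      using lin_depE[OF A _ d] by blast
    then show False using K by blast
  qed
  then show "rank A = nc" by (rule lin_indpt_full_rank[OF A d])
qed

lemma row_dot:
  assumes A: "A \<in> carrier_mat m n" and j: "j < m" and x: "x \<in> carrier_vec n"
  shows "row A j \<bullet> x = (\<Sum>k<n. A $$ (j, k) * x $ k)"
  using A j x by (simp add: scalar_prod_def atLeast0LessThan)

lemma Cmat_carrier: "Cmat A b x \<in> carrier_mat (dim_col A + dim_row A) (dim_row A)"
  by (simp add: Cmat_def)

lemma sum_split_add: "(\<Sum>k<n + m. f k) = (\<Sum>k<n. f k) + (\<Sum>t<m. f (n + t))" for n m :: nat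
  by (induction m) (auto simp: add.assoc)

lemma Cmat_mult_vec:
  fixes A :: "'a::comm_ring_1 mat"
  assumes A: "A \<in> carrier_mat m n" and w: "w \<in> carrier_vec m" and k: "k < n + m"
  shows "(Cmat A b x *\<^sub>v w) $ k = (if k < n then (\<Sum>j<m. A $$ (j, k) * w $ j)
            else (row A (k - n) \<bullet> x - b $ (k - n)) * w $ (k - n))"
proof -
  have "(Cmat A b x *\<^sub>v w) $ k = (\<Sum>j<m. Cmat A b x $$ (k, j) * w $ j)"
    using A w k by (simp add: Cmat_def scalar_prod_def atLeast0LessThan)
  also have "\<dots> = (if k < n then (\<Sum>j<m. A $$ (j, k) * w $ j)
            else (row A (k - n) \<bullet> x - b $ (k - n)) * w $ (k - n))"
  proof (cases "k < n")
    case True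
    then show ?thesis using A k by (simp add: Cmat_def)
  next
    case False
    have "(\<Sum>j<m. Cmat A b x $$ (k, j) * w $ j) =
          (\<Sum>j<m. if j = k - n then (row A (k - n) \<bullet> x - b $ (k - n)) * w $ (k - n) else 0)"
      by (rule sum.cong) (use A k False in \<open>auto simp: Cmat_def\<close>)
    also have "\<dots> = (row A (k - n) \<bullet> x - b $ (k - n)) * w $ (k - n)"
      using k False by simp
    finally show ?thesis using False by simp
  qed
  finally show ?thesis .
qed

lemma Cmat_entry:
  fixes A :: "'a::comm_ring_1 mat"
  assumes A: "A \<in> carrier_mat m n" and k: "k < n + m" and j: "j < m"
  shows "Cmat A b x $$ (k, j) = (if k < n then A $$ (j, k) else if k - n = j then row A j \<bullet> x - b $ j else 0)"
  using A k j by (simp add: Cmat_def)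

definition NSR :: "real mat \<Rightarrow> real vec \<Rightarrow> bool" where
  "NSR A b \<longleftrightarrow> (\<forall>x\<in>carrier_vec (dim_col A). \<forall>w\<in>carrier_vec (dim_row A).
      Cmat A b x *\<^sub>v w = 0\<^sub>v (dim_col A + dim_row A) \<longrightarrow> w = 0\<^sub>v (dim_row A))"

lemma sum_if_restrict:
  fixes m :: nat
  assumes "Z \<subseteq> {..<m}"
  shows "(\<Sum>j<m. if j \<in> Z then f j else 0) = (\<Sum>j\<in>Z. f j)"
proof -
  have "(\<Sum>j<m. if j \<in> Z then f j else 0) = (\<Sum>j\<in>{..<m} \<inter> Z. f j)"
    using sum.inter_restrict[of "{..<m}" f Z] by simp
  also have "{..<m} \<inter> Z = Z" using assms by blast
  finally show ?thesis .
qed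

lemma NSR_NSf:
  assumes A: "A \<in> carrier_mat m n" and b: "b \<in> carrier_vec m" and ns: "NSR A b"
  shows "NSf m n (\<lambda>j k. A $$ (j, k)) (\<lambda>j. b $ j)"
  unfolding NSf_def indep_def
proof (intro allI impI ballI)
  fix Z z l j
  assume Z: "Z \<subseteq> {..<m}" and hz: "\<forall>j\<in>Z. (\<Sum>k<n. A $$ (j, k) * z k) = b $ j"
    and hl: "\<forall>k<n. (\<Sum>j\<in>Z. l j * A $$ (j, k)) = 0" and jZ: "j \<in> Z"
  define x where "x = vec n z"
  define w where "w = vec m (\<lambda>j. if j \<in> Z then l j else 0)"
  have x: "x \<in> carrier_vec n" by (simp add: x_def)
  have w: "w \<in> carrier_vec m" by (simp add: w_def)
  have "Cmat A b x *\<^sub>v w = 0\<^sub>v (n + m)"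
  proof (rule eq_vecI)
    show "dim_vec (Cmat A b x *\<^sub>v w) = dim_vec (0\<^sub>v (n + m))"
      using A by (simp add: Cmat_def)
    fix k assume "k < dim_vec (0\<^sub>v (n + m))"
    then have k: "k < n + m" by simp
    show "(Cmat A b x *\<^sub>v w) $ k = 0\<^sub>v (n + m) $ k"
    proof (cases "k < n")
      case True
      have "(\<Sum>j<m. A $$ (j, k) * w $ j) = (\<Sum>j<m. if j \<in> Z then l j * A $$ (j, k) else 0)"
        by (rule sum.cong) (auto simp: w_def)
      also have "\<dots> = (\<Sum>j\<in>Z. l j * A $$ (j, k))" by (rule sum_if_restrict[OF Z])
      also have "\<dots> = 0" using hl True by simp
      finally show ?thesis using Cmat_mult_vec[OF A w k] True k by simp
    next
      case False
      define t where "t = k - n"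
      have t: "t < m" using k False by (simp add: t_def)
      have "(row A t \<bullet> x - b $ t) * w $ t = 0"
      proof (cases "t \<in> Z")
        case True
        have "row A t \<bullet> x = (\<Sum>k<n. A $$ (t, k) * z k)"
          using row_dot[OF A t x] by (simp add: x_def)
        then show ?thesis using hz True by simp
      next
        case False
        then show ?thesis using t by (simp add: w_def)
      qed
      then show ?thesis using Cmat_mult_vec[OF A w k] False k by (simp add: t_def)
    qed
  qed
  then have "w = 0\<^sub>v m" using ns x w A unfolding NSR_def by auto
  moreover have jm: "j < m" using jZ Z by auto
  ultimately have "w $ j = 0" by simp
  moreover note jm
  ultimately show "l j = 0" using jZ by (simp add: w_def)
qed

lemma Cmat_of_real:
  assumes A: "A \<in> carrier_mat m n" and b: "b \<in> carrier_vec m" and x: "x \<in> carrier_vec n"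
    and w: "w \<in> carrier_vec m" and k: "k < n + m"
  shows "(Cmat (map_mat complex_of_real A) (map_vec complex_of_real b) (map_vec complex_of_real x)
            *\<^sub>v map_vec complex_of_real w) $ k = complex_of_real ((Cmat A b x *\<^sub>v w) $ k)"
proof -
  have cA: "map_mat complex_of_real A \<in> carrier_mat m n" using A by simp
  have cw: "map_vec complex_of_real w \<in> carrier_vec m" using w by simp
  have cx: "map_vec complex_of_real x \<in> carrier_vec n" using x by simp
  show ?thesis
  proof (cases "k < n")
    case True
    have "(\<Sum>j<m. map_mat complex_of_real A $$ (j, k) * map_vec complex_of_real w $ j) =
          complex_of_real (\<Sum>j<m. A $$ (j, k) * w $ j)"
      using A w True by simp
    then show ?thesis
      using Cmat_mult_vec[OF cA cw k] Cmat_mult_vec[OF A w k] True by simp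
  next
    case False
    define t where "t = k - n"
    have t: "t < m" using k False by (simp add: t_def)
    have "row (map_mat complex_of_real A) t \<bullet> map_vec complex_of_real x = complex_of_real (row A t \<bullet> x)"
      using row_dot[OF cA t cx] row_dot[OF A t x] A x t by simp
    then have "(row (map_mat complex_of_real A) t \<bullet> map_vec complex_of_real x - map_vec complex_of_real b $ t)
               * map_vec complex_of_real w $ t = complex_of_real ((row A t \<bullet> x - b $ t) * w $ t)"
      using b w t by simp
    then show ?thesis
      using Cmat_mult_vec[OF cA cw k] Cmat_mult_vec[OF A w k] False by (simp add: t_def)
  qed
qed

lemma ns_NSR:
  assumes A: "A \<in> carrier_mat m n" and b: "b \<in> carrier_vec m" and ns: "nonsingular_lin A b"
  shows "NSR A b"
  unfolding NSR_def
proof (intro ballI impI)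
  fix x w assume x0: "x \<in> carrier_vec (dim_col A)" and w0: "w \<in> carrier_vec (dim_row A)"
    and Cw: "Cmat A b x *\<^sub>v w = 0\<^sub>v (dim_col A + dim_row A)"
  have x: "x \<in> carrier_vec n" using x0 A by simp
  have w: "w \<in> carrier_vec m" using w0 A by simp
  define Cc where "Cc = Cmat (map_mat complex_of_real A) (map_vec complex_of_real b) (map_vec complex_of_real x)"
  have Cc: "Cc \<in> carrier_mat (n + m) m" using Cmat_carrier[of "map_mat complex_of_real A"] A
    by (simp add: Cc_def)
  have rk: "vec_space.rank (n + m) Cc = m"
    using ns A x unfolding nonsingular_lin_def Cc_def by simp
  have Ccw: "Cc *\<^sub>v map_vec complex_of_real w = 0\<^sub>v (n + m)"
  proof (rule eq_vecI)
    show "dim_vec (Cc *\<^sub>v map_vec complex_of_real w) = dim_vec (0\<^sub>v (n + m))" using Cc by simp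
    fix k assume "k < dim_vec (0\<^sub>v (n + m))"
    then have k: "k < n + m" by simp
    have "(Cmat A b x *\<^sub>v w) $ k = 0" using Cw A k by simp
    then show "(Cc *\<^sub>v map_vec complex_of_real w) $ k = 0\<^sub>v (n + m) $ k"
      using Cmat_of_real[OF A b x w k] k by (simp add: Cc_def)
  qed
  have cwc: "map_vec complex_of_real w \<in> carrier_vec m" using w by simp
  have "map_vec complex_of_real w = 0\<^sub>v m"
    using vec_space.rank_full_iff[OF Cc] rk cwc Ccw by blast
  then show "w = 0\<^sub>v (dim_row A)"
    using A w by (auto simp: vec_eq_iff)
qed

lemma ker_from_L:
  assumes A: "A \<in> carrier_mat m n"
    and L: "polymat_eval m (n + m) L x * Cmat A b x = 1\<^sub>m m"
    and w: "w \<in> carrier_vec m" and Cw: "Cmat A b x *\<^sub>v w = 0\<^sub>v (n + m)"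
  shows "w = 0\<^sub>v m"
proof -
  have P: "polymat_eval m (n + m) L x \<in> carrier_mat m (n + m)" by (simp add: polymat_eval_def)
  have C: "Cmat A b x \<in> carrier_mat (n + m) m" using Cmat_carrier[of A] A by simp
  have "w = 1\<^sub>m m *\<^sub>v w" using w by simp
  also have "\<dots> = (polymat_eval m (n + m) L x * Cmat A b x) *\<^sub>v w" using L by simp
  also have "\<dots> = polymat_eval m (n + m) L x *\<^sub>v (Cmat A b x *\<^sub>v w)"
    by (rule assoc_mult_mat_vec[OF P C w])
  also have "\<dots> = polymat_eval m (n + m) L x *\<^sub>v 0\<^sub>v (n + m)" using Cw by simp
  also have "\<dots> = 0\<^sub>v m" using P by (auto simp: vec_eq_iff)
  finally show ?thesis .
qed

lemma L_NS:
  assumes A: "A \<in> carrier_mat m n" and b: "b \<in> carrier_vec m"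
    and L: "\<forall>x\<in>carrier_vec n. polymat_eval m (n + m) L x * Cmat A b x = 1\<^sub>m m"
  shows "nonsingular_lin A b"
  unfolding nonsingular_lin_def
proof (intro ballI)
  fix u :: "complex vec" assume u0: "u \<in> carrier_vec (dim_col A)"
  have u: "u \<in> carrier_vec n" using u0 A by simp
  define Cc where "Cc = Cmat (map_mat complex_of_real A) (map_vec complex_of_real b) u"
  have Cc: "Cc \<in> carrier_mat (n + m) m" using Cmat_carrier[of "map_mat complex_of_real A"] A
    by (simp add: Cc_def)
  have cA: "map_mat complex_of_real A \<in> carrier_mat m n" using A by simp
  have "\<forall>v\<in>carrier_vec m. Cc *\<^sub>v v = 0\<^sub>v (n + m) \<longrightarrow> v = 0\<^sub>v m"
  proof (intro ballI impI)
    fix v assume v: "v \<in> carrier_vec m" and Cv: "Cc *\<^sub>v v = 0\<^sub>v (n + m)"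
    define x where "x = map_vec Re u"
    have x: "x \<in> carrier_vec n" using u by (simp add: x_def)
    have key: "Cmat A b x *\<^sub>v map_vec f v = 0\<^sub>v (n + m)"
      if f: "f = Re \<or> f = Im" for f
    proof (rule eq_vecI)
      have fv: "map_vec f v \<in> carrier_vec m" using v by simp
      show "dim_vec (Cmat A b x *\<^sub>v map_vec f v) = dim_vec (0\<^sub>v (n + m))"
        using A by (simp add: Cmat_def)
      fix k assume "k < dim_vec (0\<^sub>v (n + m))"
      then have k: "k < n + m" by simp
      have hk: "(Cc *\<^sub>v v) $ k = 0" using Cv k by simp
      show "(Cmat A b x *\<^sub>v map_vec f v) $ k = 0\<^sub>v (n + m) $ k"
      proof (cases "k < n")
        case True
        have s: "(\<Sum>j<m. complex_of_real (A $$ (j, k)) * v $ j) = 0"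
          using hk Cmat_mult_vec[OF cA v k] True A by (simp add: Cc_def)
        have "(\<Sum>j<m. A $$ (j, k) * map_vec f v $ j) = f (\<Sum>j<m. complex_of_real (A $$ (j, k)) * v $ j)"
          using f v by auto
        then show ?thesis
          using Cmat_mult_vec[OF A fv k] True s k f by auto
      next
        case False
        define t where "t = k - n"
        have t: "t < m" using k False by (simp add: t_def)
        have ht: "(row (map_mat complex_of_real A) t \<bullet> u - map_vec complex_of_real b $ t) * v $ t = 0"
          using hk Cmat_mult_vec[OF cA v k] False by (simp add: Cc_def t_def)
        have "(row A t \<bullet> x - b $ t) * map_vec f v $ t = 0"
        proof (cases "v $ t = 0")
          case True
          then show ?thesis using f t v by auto
        next
          case False
          then have "row (map_mat complex_of_real A) t \<bullet> u = complex_of_real (b $ t)"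
            using ht b t by simp
          then have "(\<Sum>kk<n. complex_of_real (A $$ (t, kk)) * u $ kk) = complex_of_real (b $ t)"
            using row_dot[OF cA t u] A t by simp
          then have "Re (\<Sum>kk<n. complex_of_real (A $$ (t, kk)) * u $ kk) = b $ t" by simp
          then have "(\<Sum>kk<n. A $$ (t, kk) * x $ kk) = b $ t" using u by (simp add: x_def)
          then have "row A t \<bullet> x = b $ t" using row_dot[OF A t x] by simp
          then show ?thesis by simp
        qed
        then show ?thesis using Cmat_mult_vec[OF A fv k] False k by (simp add: t_def)
      qed
    qed
    have r: "map_vec Re v = 0\<^sub>v m" by (rule ker_from_L[OF A L[rule_format, OF x] _ key]) (use v in auto)
    have i: "map_vec Im v = 0\<^sub>v m" by (rule ker_from_L[OF A L[rule_format, OF x] _ key]) (use v in auto)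
    show "v = 0\<^sub>v m"
    proof (rule eq_vecI)
      fix j assume "j < dim_vec (0\<^sub>v m)"
      then have j: "j < m" by simp
      have "Re (v $ j) = 0" using r j v by (metis index_map_vec(1) carrier_vecD index_zero_vec(1))
      moreover have "Im (v $ j) = 0" using i j v by (metis index_map_vec(1) carrier_vecD index_zero_vec(1))
      ultimately show "v $ j = 0\<^sub>v m $ j" using j by (simp add: complex_eq_iff)
    qed (use v in simp)
  qed
  then show "vec_space.rank (dim_col A + dim_row A)
          (Cmat (map_mat complex_of_real A) (map_vec complex_of_real b) u) = dim_row A"
    using vec_space.rank_full_iff[OF Cc] A by (simp add: Cc_def)
qed

definition cpoly :: "real mat \<Rightarrow> real vec \<Rightarrow> nat \<Rightarrow> rmpoly" where
  "cpoly A b j = (\<Sum>k<dim_col A. pconst (A $$ (j, k)) * pvar k) - pconst (b $ j)"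

definition PP :: "real mat \<Rightarrow> real vec \<Rightarrow> nat set \<Rightarrow> rmpoly" where
  "PP A b S = (\<Prod>j\<in>S. cpoly A b j)"

lemma eval_cpoly:
  assumes A: "A \<in> carrier_mat m n" and j: "j < m" and x: "x \<in> carrier_vec n"
  shows "mpoly_eval (cpoly A b j) x = row A j \<bullet> x - b $ j"
  using A by (simp add: cpoly_def eval_minus eval_sum eval_mult row_dot[OF A j x])

lemma eval_PP:
  assumes A: "A \<in> carrier_mat m n" and S: "S \<subseteq> {..<m}" and x: "x \<in> carrier_vec n"
  shows "mpoly_eval (PP A b S) x = (\<Prod>j\<in>S. row A j \<bullet> x - b $ j)"
  unfolding PP_def eval_prod
  by (rule prod.cong[OF refl]) (use S eval_cpoly[OF A _ x] in auto)

lemma pgood_cpoly: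
  assumes A: "A \<in> carrier_mat m n"
  shows "pgood n 1 (cpoly A b j)"
  unfolding cpoly_def
proof (rule pgood_minus)
  show "pgood n 1 (\<Sum>k<dim_col A. pconst (A $$ (j, k)) * pvar k)"
  proof (rule pgood_sum)
    fix k assume "k \<in> {..<dim_col A}"
    then have "k < n" using A by simp
    then have "pgood n (0 + 1) (pconst (A $$ (j, k)) * pvar k)"
      by (intro pgood_mult pgood_pconst pgood_pvar)
    then show "pgood n 1 (pconst (A $$ (j, k)) * pvar k)" by simp
  qed
qed simp

lemma pgood_PP:
  assumes A: "A \<in> carrier_mat m n"
  shows "pgood n (card S) (PP A b S)"
  unfolding PP_def by (rule pgood_prod) (rule pgood_cpoly[OF A])

lemma pgood_const_PP:
  assumes A: "A \<in> carrier_mat m n" and "card S \<le> d"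
  shows "pgood n d (pconst c * PP A b S)"
proof -
  have "pgood n (0 + card S) (pconst c * PP A b S)"
    by (intro pgood_mult pgood_pconst pgood_PP[OF A])
  then show ?thesis by (rule pgood_mono) (use assms(2) in simp)
qed

lemma rank_bound:
  assumes A: "A \<in> carrier_mat m n" and Z: "Z \<subseteq> {..<m}" and sp: "spans m n (\<lambda>j k. A $$ (j, k)) Z"
  shows "vec_space.rank m A \<le> card Z"
proof -
  define p where "p = card Z"
  have finZ: "finite Z" using Z finite_subset by blast
  obtain h where h: "bij_betw h {0..<p} Z" using ex_bij_betw_nat_finite[OF finZ] by (auto simp: p_def)
  define mu where "mu i = (SOME mu. \<forall>k<n. A $$ (i, k) = (\<Sum>j\<in>Z. mu j * A $$ (j, k)))" for i
  have mu: "\<forall>k<n. A $$ (i, k) = (\<Sum>j\<in>Z. mu i j * A $$ (j, k))" if "i < m" for i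
  proof -
    have "\<exists>mu. \<forall>k<n. A $$ (i, k) = (\<Sum>j\<in>Z. mu j * A $$ (j, k))"
      using sp that unfolding spans_def by blast
    then show ?thesis unfolding mu_def by (rule someI_ex)
  qed
  define T where "T = mat m p (\<lambda>(i, t). mu i (h t))"
  define B where "B = mat p n (\<lambda>(t, k). A $$ (h t, k))"
  have T: "T \<in> carrier_mat m p" by (simp add: T_def)
  have B: "B \<in> carrier_mat p n" by (simp add: B_def)
  have "A = T * B"
  proof (rule eq_matI)
    fix i k assume i: "i < dim_row (T * B)" and k: "k < dim_col (T * B)"
    then have i': "i < m" and k': "k < n" using T B by auto
    have "(T * B) $$ (i, k) = (\<Sum>t\<in>{0..<p}. mu i (h t) * A $$ (h t, k))"
      using i' k' T B by (simp add: scalar_prod_def T_def B_def)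
    also have "\<dots> = (\<Sum>j\<in>Z. mu i j * A $$ (j, k))"
      using sum.reindex_bij_betw[OF h, of "\<lambda>j. mu i j * A $$ (j, k)"] by simp
    also have "\<dots> = A $$ (i, k)" using mu[OF i'] k' by simp
    finally show "A $$ (i, k) = (T * B) $$ (i, k)" by simp
  qed (use A T B in auto)
  then have "vec_space.rank m A \<le> p"
    by (rule vec_space.rank_le_factor[OF A T B])
  then show ?thesis by (simp add: p_def)
qed

lemma construct:
  assumes A: "A \<in> carrier_mat m n" and b: "b \<in> carrier_vec m" and ns: "NSR A b"
  shows "\<exists>L :: nat \<Rightarrow> nat \<Rightarrow> rmpoly.
              (\<forall>i<m. \<forall>k<n+m. mpoly_vars_below n (L i k)) \<and>
              (\<forall>x \<in> carrier_vec n. polymat_eval m (n+m) L x * Cmat A b x = 1\<^sub>m m) \<and>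
              (\<forall>i<m. \<forall>k<n+m. mpoly_degree (L i k) \<le> m - vec_space.rank m A)"
proof -
  let ?a = "\<lambda>j k. A $$ (j, k)" and ?bb = "\<lambda>j. b $ j"
  define r where "r = vec_space.rank m A"
  have nsf: "NSf m n ?a ?bb" by (rule NSR_NSf[OF A b ns])
  obtain al where al_supp: "\<forall>Z'. al Z' \<noteq> 0 \<longrightarrow> Z' \<subseteq> {..<m} \<and> indep n ?a Z' \<and> spans m n ?a Z'"
    and al_id: "\<forall>x. (\<Sum>Z'\<in>Pow {..<m}. al Z' * (\<Prod>j\<in>{..<m} - Z'. cf n ?a ?bb j x)) = 1"
    using K_lemma[OF nsf subset_refl spans_all] by blast
  define G where "G = {Z' \<in> Pow {..<m}. al Z' \<noteq> 0}"
  have finG: "finite G" by (simp add: G_def)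
  have GZ: "Z' \<subseteq> {..<m}" and Gind: "indep n ?a Z'" and Gsp: "spans m n ?a Z'" if "Z' \<in> G" for Z'
    using that al_supp by (auto simp: G_def)
  have dual: "\<exists>zz. \<forall>j\<in>Z'. (\<Sum>k<n. A $$ (j, k) * zz k) = (if j = i then 1 else 0)"
    if Z': "Z' \<in> G" and i: "i \<in> Z'" for Z' i
  proof -
    have fin: "finite Z'" using GZ[OF Z'] finite_subset by blast
    from fredholm[OF fin, where n=n and a="?a" and y="\<lambda>j. if j = i then 1 else 0"] show ?thesis
    proof
      assume "\<exists>l. (\<forall>k<n. (\<Sum>j\<in>Z'. l j * A $$ (j, k)) = 0) \<and>
          (\<Sum>j\<in>Z'. l j * (if j = i then 1 else 0)) \<noteq> 0"
      then obtain l where l1: "\<forall>k<n. (\<Sum>j\<in>Z'. l j * A $$ (j, k)) = 0"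
        and l2: "(\<Sum>j\<in>Z'. l j * (if j = i then 1 else 0)) \<noteq> 0" by blast
      have "\<forall>j\<in>Z'. l j = 0" using Gind[OF Z'] l1 unfolding indep_def by blast
      then have "(\<Sum>j\<in>Z'. l j * (if j = i then 1 else 0)) = 0" by simp
      then show ?thesis using l2 by simp
    qed
  qed
  define dz where "dz Z' i = (SOME zz. \<forall>j\<in>Z'. (\<Sum>k<n. A $$ (j, k) * zz k) = (if j = i then 1 else 0))" for Z' i
  have dz: "(\<Sum>k<n. A $$ (j, k) * dz Z' i k) = (if j = i then 1 else 0)"
    if "Z' \<in> G" "i \<in> Z'" "j \<in> Z'" for Z' i j
  proof -
    have "\<forall>j\<in>Z'. (\<Sum>k<n. A $$ (j, k) * dz Z' i k) = (if j = i then 1 else 0)"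
      unfolding dz_def by (rule someI_ex[OF dual[OF that(1,2)]])
    then show ?thesis using that(3) by blast
  qed
  define Y where "Y Z' = {..<m} - Z'" for Z'
  have cardY: "card (Y Z') \<le> m - r" if "Z' \<in> G" for Z'
  proof -
    have "r \<le> card Z'" unfolding r_def by (rule rank_bound[OF A GZ[OF that] Gsp[OF that]])
    moreover have "card (Y Z') = m - card Z'"
      unfolding Y_def using GZ[OF that] by (simp add: card_Diff_subset finite_subset)
    ultimately show ?thesis by simp
  qed
  define L where "L i k = (if k < n then
      (\<Sum>Z'\<in>G. pconst (al Z' * (if i \<in> Z' then dz Z' i k else 0)) * PP A b (Y Z'))
    else (\<Sum>Z'\<in>G. pconst (al Z') *
        ((if i \<in> Z' \<and> k - n \<notin> Z' then pconst (- (\<Sum>kk<n. A $$ (k - n, kk) * dz Z' i kk)) * PP A b (Y Z' - {k - n}) else 0)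
         + (if i \<notin> Z' \<and> k - n = i then pconst 1 * PP A b (Y Z' - {i}) else 0))))" for i k
  have Lgood: "pgood n (m - r) (L i k)" for i k
  proof (cases "k < n")
    case True
    show ?thesis unfolding L_def using True
      by (auto intro!: pgood_sum pgood_const_PP[OF A] cardY)
  next
    case False
    have c1: "card (Y Z' - {j}) \<le> m - r" if "Z' \<in> G" for Z' j
      using cardY[OF that] card_Diff1_le[of "Y Z'" j] unfolding Y_def by simp
    have "pgood n (m - r) (pconst (al Z') *
        ((if i \<in> Z' \<and> k - n \<notin> Z' then pconst (- (\<Sum>kk<n. A $$ (k - n, kk) * dz Z' i kk)) * PP A b (Y Z' - {k - n}) else 0)
         + (if i \<notin> Z' \<and> k - n = i then pconst 1 * PP A b (Y Z' - {i}) else 0)))" if Z': "Z' \<in> G" for Z'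
    proof -
      have "pgood n (0 + (m - r)) (pconst (al Z') *
        ((if i \<in> Z' \<and> k - n \<notin> Z' then pconst (- (\<Sum>kk<n. A $$ (k - n, kk) * dz Z' i kk)) * PP A b (Y Z' - {k - n}) else 0)
         + (if i \<notin> Z' \<and> k - n = i then pconst 1 * PP A b (Y Z' - {i}) else 0)))"
        by (intro pgood_mult pgood_pconst pgood_add) (auto intro!: pgood_const_PP[OF A] c1[OF Z'])
      then show ?thesis by simp
    qed
    then show ?thesis unfolding L_def using False by (auto intro!: pgood_sum)
  qed
  show ?thesis
  proof (intro exI[of _ L] conjI allI impI ballI)
    fix i k assume "i < m" "k < n + m"
    show "mpoly_vars_below n (L i k)" using Lgood by (rule pgood_vars)
  next
    fix i k assume "i < m" "k < n + m"
    show "mpoly_degree (L i k) \<le> m - vec_space.rank m A" using Lgood[of i k] pgood_degree by (simp add: r_def)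
  next
    fix x :: "real vec" assume x: "x \<in> carrier_vec n"
    define cx where "cx j = row A j \<bullet> x - b $ j" for j
    define PY where "PY S = (\<Prod>j\<in>S. cx j)" for S
    have evY: "mpoly_eval (PP A b (Y Z')) x = PY (Y Z')" for Z'
      using eval_PP[OF A _ x, of "Y Z'" b] by (simp add: PY_def cx_def Y_def)
    have evYj: "mpoly_eval (PP A b (Y Z' - {j})) x = PY (Y Z' - {j})" for Z' j
    proof -
      have "Y Z' - {j} \<subseteq> {..<m}" by (auto simp: Y_def)
      from eval_PP[OF A this x, of b] show ?thesis by (simp add: PY_def cx_def)
    qed
    have finY: "finite (Y Z')" for Z' by (simp add: Y_def)
    have PYrem: "PY (Y Z') = cx j * PY (Y Z' - {j})" if "j \<in> Y Z'" for Z' j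
      unfolding PY_def using prod.remove[OF finY that] .
    have C: "Cmat A b x \<in> carrier_mat (n + m) m" using Cmat_carrier[of A b x] A by simp
    have P: "polymat_eval m (n + m) L x \<in> carrier_mat m (n + m)" by (simp add: polymat_eval_def)
    show "polymat_eval m (n + m) L x * Cmat A b x = 1\<^sub>m m"
    proof (rule eq_matI)
      show "dim_row (polymat_eval m (n + m) L x * Cmat A b x) = dim_row (1\<^sub>m m)" using P by simp
      show "dim_col (polymat_eval m (n + m) L x * Cmat A b x) = dim_col (1\<^sub>m m)" using C by simp
      fix i j assume "i < dim_row (1\<^sub>m m)" "j < dim_col (1\<^sub>m m)"
      then have i: "i < m" and j: "j < m" by auto
      define sv where "sv Z' = (\<Sum>kk<n. A $$ (j, kk) * dz Z' i kk)" for Z'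
      have ev1: "mpoly_eval (L i k) x = (\<Sum>Z'\<in>G. al Z' * (if i \<in> Z' then dz Z' i k else 0) * PY (Y Z'))"
        if k: "k < n" for k
        unfolding L_def using k by (simp add: eval_sum eval_mult evY)
      have ev2: "mpoly_eval (L i (n + j)) x = (\<Sum>Z'\<in>G. al Z' *
          ((if i \<in> Z' \<and> j \<notin> Z' then - sv Z' * PY (Y Z' - {j}) else 0)
           + (if i \<notin> Z' \<and> j = i then PY (Y Z' - {i}) else 0)))"
      proof -
        have Lnj: "L i (n + j) = (\<Sum>Z'\<in>G. pconst (al Z') *
          ((if i \<in> Z' \<and> j \<notin> Z' then pconst (- sv Z') * PP A b (Y Z' - {j}) else 0)
           + (if i \<notin> Z' \<and> j = i then pconst 1 * PP A b (Y Z' - {i}) else 0)))"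
          unfolding L_def sv_def by (simp cong: if_cong)
        show ?thesis unfolding Lnj eval_sum
        proof (rule sum.cong[OF refl])
          fix Z'
          show "mpoly_eval (pconst (al Z') *
            ((if i \<in> Z' \<and> j \<notin> Z' then pconst (- sv Z') * PP A b (Y Z' - {j}) else 0)
             + (if i \<notin> Z' \<and> j = i then pconst 1 * PP A b (Y Z' - {i}) else 0))) x =
            al Z' * ((if i \<in> Z' \<and> j \<notin> Z' then - sv Z' * PY (Y Z' - {j}) else 0)
             + (if i \<notin> Z' \<and> j = i then PY (Y Z' - {i}) else 0))"
            by (simp add: eval_mult eval_add evYj split: if_split)
        qed
      qed
      have "(polymat_eval m (n + m) L x * Cmat A b x) $$ (i, j) =
            (\<Sum>k<n + m. mpoly_eval (L i k) x * Cmat A b x $$ (k, j))"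
        using P C i j by (simp add: scalar_prod_def atLeast0LessThan polymat_eval_def)
      also have "\<dots> = (\<Sum>k<n. mpoly_eval (L i k) x * A $$ (j, k)) + mpoly_eval (L i (n + j)) x * cx j"
      proof -
        have "(\<Sum>t<m. mpoly_eval (L i (n + t)) x * Cmat A b x $$ (n + t, j)) =
              (\<Sum>t<m. if t = j then mpoly_eval (L i (n + j)) x * cx j else 0)"
          by (rule sum.cong[OF refl]) (use j in \<open>simp add: Cmat_entry[OF A _ j] cx_def\<close>)
        also have "\<dots> = mpoly_eval (L i (n + j)) x * cx j" using j by simp
        finally have s2: "(\<Sum>t<m. mpoly_eval (L i (n + t)) x * Cmat A b x $$ (n + t, j)) =
              mpoly_eval (L i (n + j)) x * cx j" .
        have s1: "(\<Sum>k<n. mpoly_eval (L i k) x * Cmat A b x $$ (k, j)) = (\<Sum>k<n. mpoly_eval (L i k) x * A $$ (j, k))"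
          by (rule sum.cong[OF refl]) (use j in \<open>simp add: Cmat_entry[OF A _ j]\<close>)
        show ?thesis unfolding sum_split_add s1 s2 ..
      qed
      also have "(\<Sum>k<n. mpoly_eval (L i k) x * A $$ (j, k)) =
                 (\<Sum>Z'\<in>G. al Z' * (if i \<in> Z' then sv Z' else 0) * PY (Y Z'))"
      proof -
        have "(\<Sum>k<n. mpoly_eval (L i k) x * A $$ (j, k)) =
              (\<Sum>k<n. \<Sum>Z'\<in>G. al Z' * (if i \<in> Z' then dz Z' i k else 0) * PY (Y Z') * A $$ (j, k))"
          by (rule sum.cong[OF refl]) (simp add: ev1 sum_distrib_right)
        also have "\<dots> = (\<Sum>Z'\<in>G. \<Sum>k<n. al Z' * (if i \<in> Z' then dz Z' i k else 0) * PY (Y Z') * A $$ (j, k))"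
          by (rule sum.swap)
        also have "\<dots> = (\<Sum>Z'\<in>G. al Z' * (if i \<in> Z' then sv Z' else 0) * PY (Y Z'))"
        proof (rule sum.cong[OF refl])
          fix Z'
          show "(\<Sum>k<n. al Z' * (if i \<in> Z' then dz Z' i k else 0) * PY (Y Z') * A $$ (j, k)) =
                al Z' * (if i \<in> Z' then sv Z' else 0) * PY (Y Z')"
            by (cases "i \<in> Z'") (simp_all add: sv_def sum_distrib_left sum_distrib_right mult_ac)
        qed
        finally show ?thesis .
      qed
      also have "mpoly_eval (L i (n + j)) x * cx j = (\<Sum>Z'\<in>G. al Z' *
          ((if i \<in> Z' \<and> j \<notin> Z' then - sv Z' * PY (Y Z' - {j}) else 0)
           + (if i \<notin> Z' \<and> j = i then PY (Y Z' - {i}) else 0)) * cx j)"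
        by (simp add: ev2 sum_distrib_right)
      also have "(\<Sum>Z'\<in>G. al Z' * (if i \<in> Z' then sv Z' else 0) * PY (Y Z')) + \<dots> =
                 (\<Sum>Z'\<in>G. al Z' * (if i \<in> Z' then sv Z' else 0) * PY (Y Z') + al Z' *
          ((if i \<in> Z' \<and> j \<notin> Z' then - sv Z' * PY (Y Z' - {j}) else 0)
           + (if i \<notin> Z' \<and> j = i then PY (Y Z' - {i}) else 0)) * cx j)"
        by (simp add: sum.distrib)
      also have "\<dots> = (\<Sum>Z'\<in>G. (if i = j then 1 else 0) * (al Z' * PY (Y Z')))"
      proof (rule sum.cong[OF refl])
        fix Z' assume Z': "Z' \<in> G"
        show "al Z' * (if i \<in> Z' then sv Z' else 0) * PY (Y Z') + al Z' *
          ((if i \<in> Z' \<and> j \<notin> Z' then - sv Z' * PY (Y Z' - {j}) else 0)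
           + (if i \<notin> Z' \<and> j = i then PY (Y Z' - {i}) else 0)) * cx j =
          (if i = j then 1 else 0) * (al Z' * PY (Y Z'))"
        proof (cases "i \<in> Z'")
          case iZ: True
          show ?thesis
          proof (cases "j \<in> Z'")
            case True
            then show ?thesis using iZ dz[OF Z' iZ True] by (simp add: sv_def)
          next
            case False
            then have "j \<in> Y Z'" using j by (simp add: Y_def)
            then have "PY (Y Z') = cx j * PY (Y Z' - {j})" by (rule PYrem)
            then show ?thesis using iZ False by (auto simp: algebra_simps)
          qed
        next
          case False
          show ?thesis
          proof (cases "j = i")
            case True
            then have "i \<in> Y Z'" using i False by (simp add: Y_def)
            then have "PY (Y Z') = cx i * PY (Y Z' - {i})" by (rule PYrem)
            then show ?thesis using True False by (simp add: algebra_simps)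
          next
            case ji: False
            then show ?thesis using False by simp
          qed
        qed
      qed
      also have "\<dots> = (if i = j then 1 else 0) * (\<Sum>Z'\<in>G. al Z' * PY (Y Z'))"
        by (simp add: sum_distrib_left)
      also have "(\<Sum>Z'\<in>G. al Z' * PY (Y Z')) = 1"
      proof -
        have "(\<Sum>Z'\<in>G. al Z' * PY (Y Z')) = (\<Sum>Z'\<in>Pow {..<m}. al Z' * PY (Y Z'))"
          by (rule sum.mono_neutral_left) (auto simp: G_def)
        also have "\<dots> = (\<Sum>Z'\<in>Pow {..<m}. al Z' * (\<Prod>j\<in>{..<m} - Z'. cf n ?a ?bb j (\<lambda>k. x $ k)))"
        proof (rule sum.cong[OF refl])
          fix Z' assume "Z' \<in> Pow {..<m}"
          have "PY (Y Z') = (\<Prod>j\<in>{..<m} - Z'. cf n ?a ?bb j (\<lambda>k. x $ k))"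
            unfolding PY_def Y_def
            by (rule prod.cong[OF refl]) (simp add: cx_def cf_def row_dot[OF A _ x])
          then show "al Z' * PY (Y Z') = al Z' * (\<Prod>j\<in>{..<m} - Z'. cf n ?a ?bb j (\<lambda>k. x $ k))" by simp
        qed
        also have "\<dots> = 1" using al_id by blast
        finally show ?thesis .
      qed
      finally show "(polymat_eval m (n + m) L x * Cmat A b x) $$ (i, j) = 1\<^sub>m m $$ (i, j)"
        using i j by simp
    qed
  qed
qed

theorem proposition4p1:
  fixes A :: "real mat" and b :: "real vec" and m n :: nat
  assumes "A \<in> carrier_mat m n" and "b \<in> carrier_vec m"
  shows "(nonsingular_lin A b \<longleftrightarrow>
           (\<exists>L :: nat \<Rightarrow> nat \<Rightarrow> rmpoly.
              (\<forall>i<m. \<forall>k<n+m. mpoly_vars_below n (L i k)) \<and>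
              (\<forall>x \<in> carrier_vec n. polymat_eval m (n+m) L x * Cmat A b x = 1\<^sub>m m)))
       \<and> (nonsingular_lin A b \<longrightarrow>
           (\<exists>L :: nat \<Rightarrow> nat \<Rightarrow> rmpoly.
              (\<forall>i<m. \<forall>k<n+m. mpoly_vars_below n (L i k)) \<and>
              (\<forall>x \<in> carrier_vec n. polymat_eval m (n+m) L x * Cmat A b x = 1\<^sub>m m) \<and>
              (\<forall>i<m. \<forall>k<n+m. mpoly_degree (L i k) \<le> m - vec_space.rank m A)))"
proof -
  have A: "A \<in> carrier_mat m n" and b: "b \<in> carrier_vec m" using assms by auto
  have deg: "nonsingular_lin A b \<longrightarrow>
           (\<exists>L :: nat \<Rightarrow> nat \<Rightarrow> rmpoly.
              (\<forall>i<m. \<forall>k<n+m. mpoly_vars_below n (L i k)) \<and>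
              (\<forall>x \<in> carrier_vec n. polymat_eval m (n+m) L x * Cmat A b x = 1\<^sub>m m) \<and>
              (\<forall>i<m. \<forall>k<n+m. mpoly_degree (L i k) \<le> m - vec_space.rank m A))"
    using construct[OF A b ns_NSR[OF A b]] by blast
  have eqv: "nonsingular_lin A b \<longleftrightarrow>
           (\<exists>L :: nat \<Rightarrow> nat \<Rightarrow> rmpoly.
              (\<forall>i<m. \<forall>k<n+m. mpoly_vars_below n (L i k)) \<and>
              (\<forall>x \<in> carrier_vec n. polymat_eval m (n+m) L x * Cmat A b x = 1\<^sub>m m))"
  proof
    assume "nonsingular_lin A b"
    then show "\<exists>L :: nat \<Rightarrow> nat \<Rightarrow> rmpoly.
              (\<forall>i<m. \<forall>k<n+m. mpoly_vars_below n (L i k)) \<and>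
              (\<forall>x \<in> carrier_vec n. polymat_eval m (n+m) L x * Cmat A b x = 1\<^sub>m m)"
      using deg by blast
  next
    assume "\<exists>L :: nat \<Rightarrow> nat \<Rightarrow> rmpoly.
              (\<forall>i<m. \<forall>k<n+m. mpoly_vars_below n (L i k)) \<and>
              (\<forall>x \<in> carrier_vec n. polymat_eval m (n+m) L x * Cmat A b x = 1\<^sub>m m)"
    then obtain L :: "nat \<Rightarrow> nat \<Rightarrow> rmpoly" where
      L: "\<forall>x \<in> carrier_vec n. polymat_eval m (n+m) L x * Cmat A b x = 1\<^sub>m m" by blast
    show "nonsingular_lin A b" by (rule L_NS[OF A b L])
  qed
  show ?thesis using eqv deg by blast
qed

end
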